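(* Let $X$ be a real Banach space and $T:X\rightrightarrows X^*$ maximal monotone. Then $$D\big(\delta_{D(T)}^*\big)\subseteq 0^+\big(\mathrm{cl}_{w*}\mathrm{conv}\,R(T)\big),\qquad D\big(\delta_{R(T)}^*\big)\cap X\subseteq 0^+\big(\mathrm{cl}\,\mathrm{conv}\,D(T)\big),$$ where $\delta_{D(T)}^*:X^*\to\mathbb{R}\cup\{\pm\infty\}$, $\delta_{D(T)}^*(u^* )=\sup_{x\in D(T)}\langle x,u^*\rangle$, and $\delta_{R(T)}^*:X^{**}\to\mathbb{R}\cup\{\pm\infty\}$, $\delta_{R(T)}^*(u^{**})=\sup_{x^*\in R(T)}\langle u^{**},x^*\rangle$.
   Context: $X$ is identified with its canonical image in $X^{**}$. An operator $T:X\rightrightarrows X^*$ is a subset of $X\times X^*$ with domain $D(T)$ (its projection onto $X$) and range $R(T)$ (its projection onto $X^*$); $T$ is monotone if $\langle x-y,x^*-y^*\rangle\geq0$ for all $(x,x^* ),(y,y^* )\in T$, and maximal monotone if it is monotone and not properly contained in another monotone operator. For a function $f$, $D(f)=\{z\;|\;f(z)<\infty\}$. The recession cone of a set $C$ is $0^+C=\{u\;|\;x+\lambda u\in C\ \forall x\in C,\ \forall\lambda\geq0\}$. $\mathrm{cl}$ is norm closure in $X$, $\mathrm{cl}_{w*}$ weak-$*$ closure in $X^*$, $\mathrm{conv}$ convex hull. *)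

theory Defs
  imports "HOL-Analysis.Analysis"
begin

text \<open>Dual space X* is modelled as the type of bounded linear functionals 'a \<Rightarrow>L real;
  the pairing of x with x* is blinfun_apply x* x.  An operator T is a set of pairs.\<close>

definition dom_op :: "('a \<times> 'b) set \<Rightarrow> 'a set" where
  "dom_op T = fst ` T"

definition ran_op :: "('a \<times> 'b) set \<Rightarrow> 'b set" where
  "ran_op T = snd ` T"

definition monotone_op :: "('a::real_normed_vector \<times> ('a \<Rightarrow>\<^sub>L real)) set \<Rightarrow> bool" where
  "monotone_op T \<longleftrightarrow>
     (\<forall>(x, xs)\<in>T. \<forall>(y, ys)\<in>T. blinfun_apply (xs - ys) (x - y) \<ge> 0)"

definition maximal_monotone :: "('a::real_normed_vector \<times> ('a \<Rightarrow>\<^sub>L real)) set \<Rightarrow> bool" where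
  "maximal_monotone T \<longleftrightarrow> monotone_op T \<and> (\<forall>S. monotone_op S \<and> T \<subseteq> S \<longrightarrow> S = T)"

definition eff_dom :: "('a \<Rightarrow> ereal) \<Rightarrow> 'a set" where
  "eff_dom f = {z. f z < \<infinity>}"

definition rec_cone :: "'a::real_vector set \<Rightarrow> 'a set" where
  "rec_cone C = {u. \<forall>x\<in>C. \<forall>l::real. l \<ge> 0 \<longrightarrow> x + l *\<^sub>R u \<in> C}"

text \<open>Weak-* closure in X*: f is in the closure of S iff every basic weak-* neighbourhood
  of f (given by finitely many points of X and a radius) meets S.\<close>
definition wstar_closure :: "('a::real_normed_vector \<Rightarrow>\<^sub>L real) set \<Rightarrow> ('a \<Rightarrow>\<^sub>L real) set" where
  "wstar_closure S = {f. \<forall>F e. finite F \<and> e > 0 \<longrightarrow>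
      (\<exists>g\<in>S. \<forall>x\<in>F. \<bar>blinfun_apply f x - blinfun_apply g x\<bar> < e)}"

definition supp_dom :: "'a set \<Rightarrow> ('a::real_normed_vector \<Rightarrow>\<^sub>L real) \<Rightarrow> ereal" where
  "supp_dom A u = (SUP x\<in>A. ereal (blinfun_apply u x))"

definition supp_ran :: "('a::real_normed_vector \<Rightarrow>\<^sub>L real) set \<Rightarrow>
    (('a \<Rightarrow>\<^sub>L real) \<Rightarrow>\<^sub>L real) \<Rightarrow> ereal" where
  "supp_ran B u = (SUP xs\<in>B. ereal (blinfun_apply u xs))"

definition canon_emb :: "'a::real_normed_vector \<Rightarrow> (('a \<Rightarrow>\<^sub>L real) \<Rightarrow>\<^sub>L real)" where
  "canon_emb x = Blinfun (\<lambda>f. blinfun_apply f x)"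

end

theory Submission
  imports Defs
begin

definition lgraph :: "('v::real_vector \<Rightarrow> real) \<Rightarrow> ('v \<times> real) set \<Rightarrow> bool" where
 "lgraph p G \<longleftrightarrow> (0,0) \<in> G \<and> (\<forall>x\<in>G. \<forall>y\<in>G. x + y \<in> G) \<and> (\<forall>c. \<forall>x\<in>G. c *\<^sub>R x \<in> G)
    \<and> (\<forall>x a b. (x,a)\<in>G \<longrightarrow> (x,b)\<in>G \<longrightarrow> a = b) \<and> (\<forall>x a. (x,a)\<in>G \<longrightarrow> a \<le> p x)"

lemma lgraphD:
  assumes "lgraph p G"
  shows "(0,0) \<in> G" "\<And>u v. u\<in>G \<Longrightarrow> v\<in>G \<Longrightarrow> u+v\<in>G"
    "\<And>k u. u\<in>G \<Longrightarrow> k *\<^sub>R u \<in> G"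
    "\<And>x a b. (x,a)\<in>G \<Longrightarrow> (x,b)\<in>G \<Longrightarrow> a = b"
    "\<And>x a. (x,a)\<in>G \<Longrightarrow> a \<le> p x" using assms unfolding lgraph_def by blast+

lemma lgraph_key:
  fixes p :: "'v::real_vector \<Rightarrow> real"
  assumes cvx: "\<And>x y u. 0 \<le> u \<Longrightarrow> u \<le> 1 \<Longrightarrow> p (u *\<^sub>R x + (1-u) *\<^sub>R y) \<le> u * p x + (1-u) * p y"
    and G: "lgraph p G" and ma: "(m,a)\<in>G" and mb: "(m',b)\<in>G" and s: "s>0" and t: "t>0"
  shows "t*b + s*a \<le> t * p (m' - s *\<^sub>R y) + s * p (m + t *\<^sub>R y)"
proof -
  have "(1/(s+t)) *\<^sub>R (t *\<^sub>R (m',b) + s *\<^sub>R (m,a)) \<in> G"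
    using G ma mb unfolding lgraph_def by blast
  hence "(1/(s+t)) * (t*b + s*a) \<le> p ((1/(s+t)) *\<^sub>R (t *\<^sub>R m' + s *\<^sub>R m))"
    using G unfolding lgraph_def by simp
  also have "(1/(s+t)) *\<^sub>R (t *\<^sub>R m' + s *\<^sub>R m) = (t/(s+t)) *\<^sub>R (m' - s *\<^sub>R y) + (1 - t/(s+t)) *\<^sub>R (m + t *\<^sub>R y)"
  proof -
    have e: "1 - t/(s+t) = s/(s+t)" using s t by (simp add: field_simps)
    show ?thesis unfolding e using s t
      by (simp add: algebra_simps scaleR_add_right scaleR_diff_right divide_inverse)
  qed
  also have "p \<dots> \<le> (t/(s+t)) * p (m' - s *\<^sub>R y) + (1 - t/(s+t)) * p (m + t *\<^sub>R y)"
    using s t by (intro cvx) auto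
  finally have "(1/(s+t)) * (t*b + s*a) \<le> (t/(s+t)) * p (m' - s *\<^sub>R y) + (s/(s+t)) * p (m + t *\<^sub>R y)"
    using s t by (simp add: field_simps)
  hence "(s+t) * ((1/(s+t)) * (t*b + s*a)) \<le> (s+t) * ((t/(s+t)) * p (m' - s *\<^sub>R y) + (s/(s+t)) * p (m + t *\<^sub>R y))"
    using s t by (intro mult_left_mono) auto
  moreover have "(s+t) * ((1/(s+t)) * (t*b + s*a)) = t*b + s*a" using s t by simp
  moreover have "(s+t) * ((t/(s+t)) * p (m' - s *\<^sub>R y) + (s/(s+t)) * p (m + t *\<^sub>R y))
     = t * p (m' - s *\<^sub>R y) + s * p (m + t *\<^sub>R y)"
  proof -
    have "(s+t) * (t/(s+t)) = t" "(s+t) * (s/(s+t)) = s" using s t by auto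
    thus ?thesis by (metis (no_types, lifting) distrib_left mult.assoc)
  qed
  ultimately show ?thesis by simp
qed

lemma lgraph_extend:
  fixes p :: "'v::real_vector \<Rightarrow> real"
  assumes cvx: "\<And>x y u. 0 \<le> u \<Longrightarrow> u \<le> 1 \<Longrightarrow> p (u *\<^sub>R x + (1-u) *\<^sub>R y) \<le> u * p x + (1-u) * p y"
    and G: "lgraph p G" and y: "y \<notin> fst ` G"
  shows "\<exists>c. lgraph p {(x + t *\<^sub>R y, a + t * c) | x a t. (x,a)\<in>G}"
proof -
  define L where "L = {(b - p (m - s *\<^sub>R y))/s | m b s. (m,b)\<in>G \<and> s > 0}"
  define c where "c = Sup L"
  have G0: "(0,0) \<in> G" and Gadd: "\<And>u v. u\<in>G \<Longrightarrow> v\<in>G \<Longrightarrow> u+v\<in>G"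
    and Gsc: "\<And>k u. u\<in>G \<Longrightarrow> k *\<^sub>R u \<in> G"
    and Gfun: "\<And>x a b. (x,a)\<in>G \<Longrightarrow> (x,b)\<in>G \<Longrightarrow> a = b"
    and Gle: "\<And>x a. (x,a)\<in>G \<Longrightarrow> a \<le> p x" using G unfolding lgraph_def by blast+
  have Lle: "l \<le> (p (m + t *\<^sub>R y) - a)/t" if "l \<in> L" "(m,a)\<in>G" "t>0" for l m a t
  proof -
    from that(1) obtain m' b s where l: "l = (b - p (m' - s *\<^sub>R y))/s" "(m',b)\<in>G" "s>0"
      unfolding L_def by blast
    have "t*b + s*a \<le> t * p (m' - s *\<^sub>R y) + s * p (m + t *\<^sub>R y)"
      using lgraph_key[OF cvx G that(2) l(2) l(3) that(3)] by blast
    hence "t * (b - p (m' - s *\<^sub>R y)) \<le> s * (p (m + t *\<^sub>R y) - a)" by (simp add: algebra_simps)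
    moreover have "b - p (m' - s *\<^sub>R y) = l * s" using l(1,3) by simp
    ultimately have "s * (l * t) \<le> s * (p (m + t *\<^sub>R y) - a)" by (simp add: algebra_simps)
    hence "l * t \<le> p (m + t *\<^sub>R y) - a" using l(3) by simp
    thus ?thesis using that(3) by (simp add: divide_simps)
  qed
  have "(0 - p (0 - 1 *\<^sub>R y))/1 \<in> L" unfolding L_def using G0 by (intro CollectI exI[of _ 0] exI[of _ "0::real"] exI[of _ "1::real"]) simp
  hence Lne: "L \<noteq> {}" by blast
  have "l \<le> p y" if "l\<in>L" for l using Lle[OF that G0, of 1] by simp
  hence Lbdd: "bdd_above L" by (auto simp: bdd_above_def)
  have c_up: "c \<le> (p (m + t *\<^sub>R y) - a)/t" if "(m,a)\<in>G" "t>0" for m a t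
    unfolding c_def using Lne Lle[OF _ that] by (intro cSup_least) auto
  have c_lo: "(b - p (m - s *\<^sub>R y))/s \<le> c" if "(m,b)\<in>G" "s>0" for m b s
    unfolding c_def using Lbdd that by (intro cSup_upper) (auto simp: L_def)
  define G' where "G' = {(x + t *\<^sub>R y, a + t * c) | x a t. (x,a)\<in>G}"
  have G'I: "(x + t *\<^sub>R y, a + t * c) \<in> G'" if "(x,a)\<in>G" for x a t
    unfolding G'_def using that by blast
  have "lgraph p G'"
    unfolding lgraph_def
  proof (intro conjI allI ballI impI)
    show "(0,0) \<in> G'" unfolding G'_def using G0 by force
  next
    fix u v assume "u \<in> G'" "v \<in> G'"
    then obtain x1 a1 t1 x2 a2 t2 where "u = (x1 + t1 *\<^sub>R y, a1 + t1 * c)" "(x1,a1)\<in>G"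
      "v = (x2 + t2 *\<^sub>R y, a2 + t2 * c)" "(x2,a2)\<in>G" unfolding G'_def by blast
    moreover have "(x1+x2, a1+a2) \<in> G" using Gadd[OF \<open>(x1,a1)\<in>G\<close> \<open>(x2,a2)\<in>G\<close>] by simp
    ultimately show "u + v \<in> G'" using G'I[of "x1+x2" "a1+a2" "t1+t2"]
      by (simp add: algebra_simps)
  next
    fix k u assume "u \<in> G'"
    then obtain x1 a1 t1 where "u = (x1 + t1 *\<^sub>R y, a1 + t1 * c)" "(x1,a1)\<in>G" unfolding G'_def by blast
    moreover have "(k *\<^sub>R x1, k * a1) \<in> G" using Gsc[OF \<open>(x1,a1)\<in>G\<close>, of k] by simp
    ultimately show "k *\<^sub>R u \<in> G'" using G'I[of "k *\<^sub>R x1" "k*a1" "k*t1"]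
      by (simp add: algebra_simps)
  next
    fix x a b assume "(x,a) \<in> G'" "(x,b) \<in> G'"
    then obtain x1 a1 t1 x2 a2 t2 where e: "x = x1 + t1 *\<^sub>R y" "a = a1 + t1 * c" "(x1,a1)\<in>G"
      "x = x2 + t2 *\<^sub>R y" "b = a2 + t2 * c" "(x2,a2)\<in>G" unfolding G'_def by blast
    have "(x1 - x2, a1 - a2) \<in> G" using Gadd[OF e(3) Gsc[OF e(6), of "-1"]] by simp
    show "a = b"
    proof (cases "t1 = t2")
      case True
      hence "x1 = x2" using e by simp
      hence "a1 = a2" using Gfun e by blast
      thus ?thesis using e True by simp
    next
      case False
      have "x1 - x2 = (t2 - t1) *\<^sub>R y" using e by (simp add: algebra_simps)
      hence "y = (1/(t2-t1)) *\<^sub>R (x1 - x2)" using False by simp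
      hence "(y, (1/(t2-t1)) * (a1 - a2)) \<in> G" using Gsc[OF \<open>(x1 - x2, a1 - a2) \<in> G\<close>, of "1/(t2-t1)"] by simp
      hence "y \<in> fst ` G" by force
      thus ?thesis using y by blast
    qed
  next
    fix x a assume "(x,a) \<in> G'"
    then obtain x1 a1 t where e: "x = x1 + t *\<^sub>R y" "a = a1 + t * c" "(x1,a1)\<in>G" unfolding G'_def by blast
    show "a \<le> p x"
    proof (cases t "0::real" rule: linorder_cases)
      case equal thus ?thesis using e Gle by simp
    next
      case greater
      have "c \<le> (p (x1 + t *\<^sub>R y) - a1)/t" using c_up[OF e(3) greater] .
      hence "t * c \<le> p (x1 + t *\<^sub>R y) - a1" using greater by (simp add: divide_simps mult.commute)
      thus ?thesis using e by simp
    next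
      case less
      have "(a1 - p (x1 - (-t) *\<^sub>R y))/(-t) \<le> c" using c_lo[OF e(3), of "-t"] less by linarith
      hence "a1 - p (x1 - (-t) *\<^sub>R y) \<le> (-t) * c" using less by (simp add: divide_simps mult.commute)
      thus ?thesis using e by simp
    qed
  qed
  thus ?thesis unfolding G'_def by blast
qed

lemma hahn_banach_convex:
  fixes p :: "'v::real_vector \<Rightarrow> real"
  assumes cvx: "\<And>x y u. 0 \<le> u \<Longrightarrow> u \<le> 1 \<Longrightarrow> p (u *\<^sub>R x + (1-u) *\<^sub>R y) \<le> u * p x + (1-u) * p y"
    and p0: "0 \<le> p 0"
  shows "\<exists>F. (\<forall>x y. F (x + y) = F x + F y) \<and> (\<forall>c x. F (c *\<^sub>R x) = c * F x) \<and> (\<forall>x. F x \<le> p x)"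
proof -
  define A where "A = {G. lgraph p G}"
  have "\<forall>C\<in>chains A. \<exists>U\<in>A. \<forall>X\<in>C. X \<subseteq> U"
  proof
    fix C assume C: "C \<in> chains A"
    hence CA: "C \<subseteq> A" and ch: "\<And>X Y. X\<in>C \<Longrightarrow> Y\<in>C \<Longrightarrow> X \<subseteq> Y \<or> Y \<subseteq> X"
      unfolding chains_def chain_subset_def by auto
    show "\<exists>U\<in>A. \<forall>X\<in>C. X \<subseteq> U"
    proof (cases "C = {}")
      case True
      have "lgraph p {(0,0)}" unfolding lgraph_def using p0 by auto
      thus ?thesis using True unfolding A_def by blast
    next
      case False
      have lg: "\<And>X. X \<in> C \<Longrightarrow> lgraph p X" using CA unfolding A_def by auto
      have "lgraph p (\<Union>C)" unfolding lgraph_def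
      proof (intro conjI allI ballI impI)
        obtain X where "X \<in> C" using False by blast
        thus "(0,0) \<in> \<Union>C" using lgraphD(1)[OF lg[OF \<open>X\<in>C\<close>]] by blast
      next
        fix u v assume "u \<in> \<Union>C" "v \<in> \<Union>C"
        then obtain X Y where "u\<in>X" "v\<in>Y" "X\<in>C" "Y\<in>C" by blast
        thus "u + v \<in> \<Union>C"
        proof (cases "X \<subseteq> Y")
          case True thus ?thesis using lgraphD(2)[OF lg[OF \<open>Y\<in>C\<close>], of u v] \<open>u\<in>X\<close> \<open>v\<in>Y\<close> \<open>Y\<in>C\<close> by blast
        next
          case False hence "Y \<subseteq> X" using ch[of X Y] \<open>X\<in>C\<close> \<open>Y\<in>C\<close> by blast
          thus ?thesis using lgraphD(2)[OF lg[OF \<open>X\<in>C\<close>], of u v] \<open>u\<in>X\<close> \<open>v\<in>Y\<close> \<open>X\<in>C\<close> by blast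
        qed
      next
        fix k u assume "u \<in> \<Union>C"
        then obtain X where "u\<in>X" "X\<in>C" by blast
        thus "k *\<^sub>R u \<in> \<Union>C" using lgraphD(3)[OF lg[OF \<open>X\<in>C\<close>], of u k] by blast
      next
        fix x a b assume "(x,a) \<in> \<Union>C" "(x,b) \<in> \<Union>C"
        then obtain X Y where "(x,a)\<in>X" "(x,b)\<in>Y" "X\<in>C" "Y\<in>C" by blast
        thus "a = b"
        proof (cases "X \<subseteq> Y")
          case True thus ?thesis using lgraphD(4)[OF lg[OF \<open>Y\<in>C\<close>], of x a b] \<open>(x,a)\<in>X\<close> \<open>(x,b)\<in>Y\<close> by blast
        next
          case False hence "Y \<subseteq> X" using ch[of X Y] \<open>X\<in>C\<close> \<open>Y\<in>C\<close> by blast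
          thus ?thesis using lgraphD(4)[OF lg[OF \<open>X\<in>C\<close>], of x a b] \<open>(x,a)\<in>X\<close> \<open>(x,b)\<in>Y\<close> by blast
        qed
      next
        fix x a assume "(x,a) \<in> \<Union>C"
        then obtain X where "(x,a)\<in>X" "X\<in>C" by blast
        thus "a \<le> p x" using lgraphD(5)[OF lg[OF \<open>X\<in>C\<close>]] by blast
      qed
      thus ?thesis unfolding A_def by blast
    qed
  qed
  from Zorn_Lemma2[OF this] obtain G where GA: "G \<in> A" and max: "\<And>X. X \<in> A \<Longrightarrow> G \<subseteq> X \<Longrightarrow> X = G"
    by blast
  have G: "lgraph p G" using GA unfolding A_def by simp
  have all: "y \<in> fst ` G" for y
  proof (rule ccontr)
    assume y: "y \<notin> fst ` G"
    from lgraph_extend[OF cvx G y] obtain c where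
      lg: "lgraph p {(x + t *\<^sub>R y, a + t * c) | x a t. (x,a)\<in>G}" by blast
    let ?G' = "{(x + t *\<^sub>R y, a + t * c) | x a t. (x,a)\<in>G}"
    have "G \<subseteq> ?G'"
    proof
      fix u assume "u \<in> G"
      then obtain x a where "u = (x,a)" "(x,a)\<in>G" by (cases u) auto
      thus "u \<in> ?G'" by (intro CollectI exI[of _ x] exI[of _ a] exI[of _ "0::real"]) simp
    qed
    hence "?G' = G" using max[of ?G'] lg unfolding A_def by simp
    moreover have "(y, c) \<in> ?G'" using lgraphD(1)[OF G]
      by (intro CollectI exI[of _ 0] exI[of _ "0::real"] exI[of _ "1::real"]) simp
    ultimately have "(y,c) \<in> G" by simp
    thus False using y by force
  qed
  note Gfun = lgraphD(4)[OF G]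
  define F where "F x = (THE a. (x,a) \<in> G)" for x
  have FG: "(x, F x) \<in> G" for x
  proof -
    obtain a where "(x,a) \<in> G" using all[of x] by force
    hence "(THE a. (x,a) \<in> G) = a" using Gfun by blast
    thus ?thesis using \<open>(x,a)\<in>G\<close> unfolding F_def by simp
  qed
  have "F (x+y) = F x + F y" for x y
  proof -
    have "(x,F x) + (y, F y) \<in> G" using lgraphD(2)[OF G] FG by blast
    hence "(x+y, F x + F y) \<in> G" by simp
    thus ?thesis using Gfun[OF FG[of "x+y"]] by blast
  qed
  moreover have "F (c *\<^sub>R x) = c * F x" for c x
  proof -
    have "c *\<^sub>R (x,F x) \<in> G" using lgraphD(3)[OF G] FG by blast
    hence "(c *\<^sub>R x, c * F x) \<in> G" by simp
    thus ?thesis using Gfun[OF FG[of "c *\<^sub>R x"]] by blast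
  qed
  moreover have "F x \<le> p x" for x using lgraphD(5)[OF G] FG by blast
  ultimately show ?thesis by blast
qed

lemma hb_sep:
  fixes q :: "'v::real_vector \<Rightarrow> real"
  assumes qadd: "\<And>x y. q (x+y) \<le> q x + q y" and qsc: "\<And>c x. q (c *\<^sub>R x) = \<bar>c\<bar> * q x"
    and K: "convex K" "K \<noteq> {}" and e: "e > 0" and sep: "\<And>g. g\<in>K \<Longrightarrow> e \<le> q (w - g)"
  shows "\<exists>L. (\<forall>x y. L (x+y) = L x + L y) \<and> (\<forall>c x. L (c *\<^sub>R x) = c * L x) \<and> (\<forall>x. L x \<le> q x)
            \<and> (\<forall>g\<in>K. L g + e/2 \<le> L w)"
proof -
  have q0: "q 0 = 0" using qsc[of 0 0] by simp
  have qneg: "q (-x) = q x" for x using qsc[of "-1" x] by simp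
  have qnn: "0 \<le> q x" for x using qadd[of x "-x"] q0 qneg[of x] by simp
  define D where "D h = Inf ((\<lambda>g. q (h - g)) ` K)" for h
  have bdd: "bdd_below ((\<lambda>g. q (h - g)) ` K)" for h using qnn by (auto simp: bdd_below_def)
  have D_le: "D h \<le> q (h - g)" if "g \<in> K" for h g
    unfolding D_def using bdd that by (intro cInf_lower) auto
  have D_ge: "b \<le> D h" if "\<And>g. g\<in>K \<Longrightarrow> b \<le> q (h - g)" for b h
    unfolding D_def using K(2) that by (intro cInf_greatest) auto
  have D_app: "\<exists>g\<in>K. q (h - g) < D h + \<epsilon>" if "\<epsilon> > 0" for h \<epsilon>
  proof -
    have "Inf ((\<lambda>g. q (h - g)) ` K) < D h + \<epsilon>" using that unfolding D_def by simp
    from cInf_lessD[OF _ this] K(2) show ?thesis by auto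
  qed
  have Dcvx: "D (u *\<^sub>R x + (1-u) *\<^sub>R y) \<le> u * D x + (1-u) * D y" if u: "0 \<le> u" "u \<le> 1" for u x y
  proof (rule field_le_epsilon)
    fix \<epsilon> :: real assume "0 < \<epsilon>"
    obtain g1 where g1: "g1\<in>K" "q (x - g1) < D x + \<epsilon>" using D_app[OF \<open>0<\<epsilon>\<close>] by blast
    obtain g2 where g2: "g2\<in>K" "q (y - g2) < D y + \<epsilon>" using D_app[OF \<open>0<\<epsilon>\<close>] by blast
    have gK: "u *\<^sub>R g1 + (1-u) *\<^sub>R g2 \<in> K" using K(1) g1(1) g2(1) u unfolding convex_def by auto
    have eq: "(u *\<^sub>R x + (1-u) *\<^sub>R y) - (u *\<^sub>R g1 + (1-u) *\<^sub>R g2) = u *\<^sub>R (x - g1) + (1-u) *\<^sub>R (y - g2)"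
      by (simp add: algebra_simps)
    have "D (u *\<^sub>R x + (1-u) *\<^sub>R y) \<le> q (u *\<^sub>R (x - g1) + (1-u) *\<^sub>R (y - g2))"
      using D_le[OF gK] eq by metis
    also have "\<dots> \<le> u * q (x - g1) + (1-u) * q (y - g2)" using qadd qsc u by (smt (verit))
    also have "\<dots> \<le> u * (D x + \<epsilon>) + (1-u) * (D y + \<epsilon>)"
      using g1 g2 u by (intro add_mono mult_left_mono) auto
    also have "\<dots> = u * D x + (1-u) * D y + \<epsilon>" by (simp add: algebra_simps)
    finally show "D (u *\<^sub>R x + (1-u) *\<^sub>R y) \<le> u * D x + (1-u) * D y + \<epsilon>" .
  qed
  define p where "p h = D (h + w) - e/2" for h
  have pcvx: "p (u *\<^sub>R x + (1-u) *\<^sub>R y) \<le> u * p x + (1-u) * p y" if "0 \<le> u" "u \<le> 1" for u x y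
  proof -
    have eq: "u *\<^sub>R x + (1-u) *\<^sub>R y + w = u *\<^sub>R (x + w) + (1-u) *\<^sub>R (y + w)" by (simp add: algebra_simps)
    have 1: "p (u *\<^sub>R x + (1-u) *\<^sub>R y) = D (u *\<^sub>R (x + w) + (1-u) *\<^sub>R (y + w)) - e/2"
      by (simp only: p_def eq)
    have 2: "u * p x + (1-u) * p y = u * D (x+w) + (1-u) * D (y+w) - e/2"
      unfolding p_def by (simp add: algebra_simps add_divide_distrib diff_divide_distrib)
    show ?thesis unfolding 1 2 using Dcvx[OF that, of "x+w" "y+w"] by simp
  qed
  have "e \<le> D w" using sep by (intro D_ge) auto
  hence p0: "0 \<le> p 0" unfolding p_def using e by simp
  from hahn_banach_convex[OF pcvx p0] obtain L where
    Ladd: "\<And>x y. L (x + y) = L x + L y" and Lsc: "\<And>c x. L (c *\<^sub>R x) = c * L x" and Lp: "\<And>x. L x \<le> p x"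
    by blast
  have Lminus: "L (x - y) = L x - L y" for x y
    using Ladd[of x "(-1) *\<^sub>R y"] Lsc[of "-1" y] by simp
  have Dw0: "0 \<le> D w" using \<open>e \<le> D w\<close> e by simp
  have Lbd: "L h \<le> q h + D w" for h
  proof -
    have "D (h + w) - q h \<le> D w"
    proof (rule D_ge)
      fix g assume "g\<in>K"
      have "D (h + w) \<le> q (h + (w - g))" using D_le[OF \<open>g\<in>K\<close>, of "h+w"] by (simp add: algebra_simps)
      also have "\<dots> \<le> q h + q (w - g)" by (rule qadd)
      finally show "D (h + w) - q h \<le> q (w - g)" by simp
    qed
    thus ?thesis using Lp[of h] e unfolding p_def by simp
  qed
  have Lq: "L h \<le> q h" for h
  proof (rule ccontr)
    assume "\<not> L h \<le> q h"
    hence d: "L h - q h > 0" by simp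
    define t where "t = (D w + 1) / (L h - q h)"
    have t: "t > 0" using d Dw0 unfolding t_def by simp
    have "t * L h \<le> t * q h + D w" using Lbd[of "t *\<^sub>R h"] Lsc[of t h] qsc[of t h] t by simp
    hence "t * (L h - q h) \<le> D w" by (simp add: algebra_simps)
    moreover have "t * (L h - q h) = D w + 1" using d unfolding t_def by simp
    ultimately show False by simp
  qed
  have "L g + e/2 \<le> L w" if "g\<in>K" for g
  proof -
    have "L (g - w) \<le> D g - e/2" using Lp[of "g - w"] unfolding p_def by simp
    moreover have "D g \<le> 0" using D_le[OF that, of g] q0 by simp
    ultimately show ?thesis using Lminus[of g w] by simp
  qed
  thus ?thesis using Ladd Lsc Lq by blast
qed

lemma factor_lemma:
  fixes \<phi> :: "'i \<Rightarrow> 'v::real_vector \<Rightarrow> real"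
  assumes "finite F"
    and phadd: "\<And>i x y. \<phi> i (x + y) = \<phi> i x + \<phi> i y" and phsc: "\<And>i c x. \<phi> i (c *\<^sub>R x) = c * \<phi> i x"
  shows "(\<forall>x y. L (x + y) = L x + L y) \<longrightarrow> (\<forall>c x. L (c *\<^sub>R x) = c * L x) \<longrightarrow>
     (\<forall>v. (\<forall>i\<in>F. \<phi> i v = 0) \<longrightarrow> L v = 0) \<longrightarrow> (\<exists>a. \<forall>v. L v = (\<Sum>i\<in>F. a i * \<phi> i v))"
  using assms(1)
proof (induction F arbitrary: L rule: finite_induct)
  case empty thus ?case by simp
next
  case (insert j F)
  show ?case
  proof (intro impI)
    assume Ladd: "\<forall>x y. L (x + y) = L x + L y" and Lsc: "\<forall>c x. L (c *\<^sub>R x) = c * L x"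
      and ker: "\<forall>v. (\<forall>i\<in>insert j F. \<phi> i v = 0) \<longrightarrow> L v = 0"
    have phm: "\<phi> i (x - y) = \<phi> i x - \<phi> i y" for i x y using phadd[of i x "(-1) *\<^sub>R y"] phsc[of i "-1" y] by simp
    have Lm: "L (x - y) = L x - L y" for x y using Ladd Lsc by (metis add_diff_cancel_left' diff_add_cancel)
    show "\<exists>a. \<forall>v. L v = (\<Sum>i\<in>insert j F. a i * \<phi> i v)"
    proof (cases "\<exists>v0. (\<forall>i\<in>F. \<phi> i v0 = 0) \<and> \<phi> j v0 \<noteq> 0")
      case True
      then obtain v0 where v0: "\<forall>i\<in>F. \<phi> i v0 = 0" "\<phi> j v0 \<noteq> 0" by blast
      define v1 where "v1 = (1 / \<phi> j v0) *\<^sub>R v0"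
      have v1: "\<forall>i\<in>F. \<phi> i v1 = 0" "\<phi> j v1 = 1" using v0 phsc unfolding v1_def by auto
      define L' where "L' v = L v - L v1 * \<phi> j v" for v
      have "\<forall>v. (\<forall>i\<in>F. \<phi> i v = 0) \<longrightarrow> L' v = 0"
      proof (intro allI impI)
        fix v assume vF: "\<forall>i\<in>F. \<phi> i v = 0"
        let ?v' = "v - \<phi> j v *\<^sub>R v1"
        have "\<forall>i\<in>insert j F. \<phi> i ?v' = 0" using vF v1 phm phsc by simp
        hence "L ?v' = 0" using ker by blast
        thus "L' v = 0" unfolding L'_def using Lm Lsc by (simp add: mult.commute)
      qed
      moreover have "\<forall>x y. L' (x + y) = L' x + L' y" unfolding L'_def using Ladd phadd by (simp add: algebra_simps)
      moreover have "\<forall>c x. L' (c *\<^sub>R x) = c * L' x" unfolding L'_def using Lsc phsc by (simp add: algebra_simps)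
      ultimately obtain a where a: "\<forall>v. L' v = (\<Sum>i\<in>F. a i * \<phi> i v)" using insert.IH[of L'] by blast
      have "L v = (\<Sum>i\<in>insert j F. (a(j := L v1)) i * \<phi> i v)" for v
      proof -
        have "(\<Sum>i\<in>F. (a(j := L v1)) i * \<phi> i v) = (\<Sum>i\<in>F. a i * \<phi> i v)"
          using insert.hyps(2) by (intro sum.cong) auto
        thus ?thesis using insert.hyps a[rule_format, of v] unfolding L'_def by simp
      qed
      thus ?thesis by blast
    next
      case False
      have "\<forall>v. (\<forall>i\<in>F. \<phi> i v = 0) \<longrightarrow> L v = 0" using False ker by auto
      then obtain a where a: "\<forall>v. L v = (\<Sum>i\<in>F. a i * \<phi> i v)" using insert.IH[of L] Ladd Lsc by blast
      have "L v = (\<Sum>i\<in>insert j F. (a(j := 0)) i * \<phi> i v)" for v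
      proof -
        have "(\<Sum>i\<in>F. (a(j := 0)) i * \<phi> i v) = (\<Sum>i\<in>F. a i * \<phi> i v)"
          using insert.hyps(2) by (intro sum.cong) auto
        thus ?thesis using insert.hyps a[rule_format, of v] by simp
      qed
      thus ?thesis by blast
    qed
  qed
qed

lemma choose_arith:
  fixes A B c :: real
  assumes "A \<ge> 0" "B \<ge> 0" "c > 0"
  defines "\<mu> \<equiv> 2*A/c + 1" and "t \<equiv> 2*B/c + 1"
  shows "t*A + \<mu>*B \<le> t*\<mu>*c" "B < t*c" "t > 0" "\<mu> > 0"
proof -
  have mc: "\<mu> * c = 2*A + c" and tc: "t * c = 2*B + c" using assms(3) unfolding \<mu>_def t_def by (simp_all add: field_simps)
  have tA: "t*A = 2*A*B/c + A" and mB: "\<mu>*B = 2*A*B/c + B" unfolding \<mu>_def t_def by (simp_all add: field_simps)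
  have "t*\<mu>*c = t*(2*A + c)" using mc by (simp add: mult.assoc)
  also have "\<dots> = 2*(t*A) + t*c" by (simp add: algebra_simps)
  finally show "t*A + \<mu>*B \<le> t*\<mu>*c" using tA mB tc assms by simp
  show "B < t*c" using tc assms by simp
  have "2*B/c \<ge> 0" "2*A/c \<ge> 0" using assms(1-3) by simp_all
  thus "t > 0" "\<mu> > 0" unfolding t_def \<mu>_def by simp_all
qed

lemma maxmono_nonempty:
  assumes "maximal_monotone T" shows "T \<noteq> {}"
proof
  assume "T = {}"
  have "monotone_op {(0, 0)}" unfolding monotone_op_def by simp
  hence "{(0,0)} = T" using assms \<open>T = {}\<close> unfolding maximal_monotone_def by blast
  thus False using \<open>T = {}\<close> by simp
qed

lemma maxmono_add:
  fixes T :: "('a::real_normed_vector \<times> ('a \<Rightarrow>\<^sub>L real)) set"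
  assumes mm: "maximal_monotone T" and rel: "\<And>x xs. (x,xs)\<in>T \<Longrightarrow> 0 \<le> blinfun_apply (xs - ps) (x - p)"
  shows "(p, ps) \<in> T"
proof -
  have mon: "monotone_op T" using mm unfolding maximal_monotone_def by simp
  have sym: "blinfun_apply (a - b) (x - y) = blinfun_apply (b - a) (y - x)" for a b :: "'a \<Rightarrow>\<^sub>L real" and x y
    by (simp add: blinfun.bilinear_simps algebra_simps)
  have "monotone_op (insert (p,ps) T)" unfolding monotone_op_def
  proof (intro ballI, clarify)
    fix x xs y ys assume a: "(x,xs) \<in> insert (p,ps) T" "(y,ys) \<in> insert (p,ps) T"
    show "0 \<le> blinfun_apply (xs - ys) (x - y)"
    proof (cases "(x,xs) = (p,ps)")
      case True
      thus ?thesis using a(2) rel[of y ys] sym[of ps ys p y] by auto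
    next
      case False
      hence xT: "(x,xs)\<in>T" using a(1) by blast
      show ?thesis
      proof (cases "(y,ys) = (p,ps)")
        case True thus ?thesis using rel[OF xT] by simp
      next
        case False hence "(y,ys)\<in>T" using a(2) by blast
        thus ?thesis using mon xT unfolding monotone_op_def by blast
      qed
    qed
  qed
  hence "insert (p,ps) T = T" using mm unfolding maximal_monotone_def by blast
  thus ?thesis by blast
qed

lemma core1:
  fixes T :: "('a::real_normed_vector \<times> ('a \<Rightarrow>\<^sub>L real)) set"
    and u :: "'a \<Rightarrow>\<^sub>L real" and M :: real
  assumes mm: "maximal_monotone T" and M: "\<forall>x\<in>dom_op T. blinfun_apply u x \<le> M"
    and c: "blinfun_apply u z > 0" and sig: "\<forall>xs\<in>ran_op T. blinfun_apply xs z \<le> \<sigma>"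
  shows False
proof -
  obtain y ys where yT: "(y,ys)\<in>T" using maxmono_nonempty[OF mm] by auto
  have mon: "monotone_op T" using mm unfolding maximal_monotone_def by simp
  define A where "A = \<sigma> - blinfun_apply ys z"
  define B where "B = M - blinfun_apply u y"
  have A: "A \<ge> 0" using sig yT unfolding A_def ran_op_def by force
  have "y \<in> dom_op T" using yT unfolding dom_op_def by force
  hence "blinfun_apply u y \<le> M" using M by blast
  hence B: "B \<ge> 0" unfolding B_def by linarith
  define \<mu> where "\<mu> = 2*A/(blinfun_apply u z) + 1"
  define t where "t = 2*B/(blinfun_apply u z) + 1"
  note ar = choose_arith[OF A B c, folded \<mu>_def t_def]
  have "(y + t *\<^sub>R z, ys + \<mu> *\<^sub>R u) \<in> T"
  proof (rule maxmono_add[OF mm])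
    fix x xs assume xT: "(x,xs)\<in>T"
    have P: "0 \<le> blinfun_apply (xs - ys) (x - y)" using mon xT yT unfolding monotone_op_def by blast
    have e: "blinfun_apply (xs - (ys + \<mu> *\<^sub>R u)) (x - (y + t *\<^sub>R z)) =
      blinfun_apply (xs - ys) (x - y) - t * blinfun_apply xs z + t * blinfun_apply ys z
      - \<mu> * blinfun_apply u x + \<mu> * blinfun_apply u y + t * \<mu> * blinfun_apply u z"
      by (simp add: blinfun.bilinear_simps algebra_simps)
    have 1: "t * blinfun_apply xs z \<le> t * \<sigma>" using sig xT ar(3) unfolding ran_op_def
      by (intro mult_left_mono) force+
    have 2: "\<mu> * blinfun_apply u x \<le> \<mu> * M" using M xT ar(4) unfolding dom_op_def
      by (intro mult_left_mono) force+
    have 3: "t * \<sigma> = t*A + t * blinfun_apply ys z" "\<mu> * M = \<mu>*B + \<mu> * blinfun_apply u y"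
      unfolding A_def B_def by (simp_all add: algebra_simps)
    show "0 \<le> blinfun_apply (xs - (ys + \<mu> *\<^sub>R u)) (x - (y + t *\<^sub>R z))"
      unfolding e using P 1 2 3 ar(1) by linarith
  qed
  hence "y + t *\<^sub>R z \<in> dom_op T" unfolding dom_op_def by force
  hence "blinfun_apply u (y + t *\<^sub>R z) \<le> M" using M by blast
  hence "t * blinfun_apply u z \<le> B" unfolding B_def by (simp add: blinfun.bilinear_simps)
  thus False using ar(2) by simp
qed

lemma core2:
  fixes T :: "('a::real_normed_vector \<times> ('a \<Rightarrow>\<^sub>L real)) set"
    and zs :: "'a \<Rightarrow>\<^sub>L real" and M :: real
  assumes mm: "maximal_monotone T" and N: "\<forall>xs\<in>ran_op T. blinfun_apply xs u \<le> M"
    and c: "blinfun_apply zs u > 0" and sig: "\<forall>x\<in>dom_op T. blinfun_apply zs x \<le> \<sigma>"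
  shows False
proof -
  obtain y ys where yT: "(y,ys)\<in>T" using maxmono_nonempty[OF mm] by auto
  have mon: "monotone_op T" using mm unfolding maximal_monotone_def by simp
  define A where "A = \<sigma> - blinfun_apply zs y"
  define B where "B = M - blinfun_apply ys u"
  have "y \<in> dom_op T" using yT unfolding dom_op_def by force
  hence "blinfun_apply zs y \<le> \<sigma>" using sig by blast
  hence A: "A \<ge> 0" unfolding A_def by linarith
  have B: "B \<ge> 0" using N yT unfolding B_def ran_op_def by force
  define \<mu> where "\<mu> = 2*A/(blinfun_apply zs u) + 1"
  define t where "t = 2*B/(blinfun_apply zs u) + 1"
  note ar = choose_arith[OF A B c, folded \<mu>_def t_def]
  have "(y + \<mu> *\<^sub>R u, ys + t *\<^sub>R zs) \<in> T"
  proof (rule maxmono_add[OF mm])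
    fix x xs assume xT: "(x,xs)\<in>T"
    have P: "0 \<le> blinfun_apply (xs - ys) (x - y)" using mon xT yT unfolding monotone_op_def by blast
    have e: "blinfun_apply (xs - (ys + t *\<^sub>R zs)) (x - (y + \<mu> *\<^sub>R u)) =
      blinfun_apply (xs - ys) (x - y) - \<mu> * blinfun_apply xs u + \<mu> * blinfun_apply ys u
      - t * blinfun_apply zs x + t * blinfun_apply zs y + t * \<mu> * blinfun_apply zs u"
      by (simp add: blinfun.bilinear_simps algebra_simps)
    have 1: "\<mu> * blinfun_apply xs u \<le> \<mu> * M" using N xT ar(4) unfolding ran_op_def
      by (intro mult_left_mono) force+
    have 2: "t * blinfun_apply zs x \<le> t * \<sigma>" using sig xT ar(3) unfolding dom_op_def
      by (intro mult_left_mono) force+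
    have 3: "t * \<sigma> = t*A + t * blinfun_apply zs y" "\<mu> * M = \<mu>*B + \<mu> * blinfun_apply ys u"
      unfolding A_def B_def by (simp_all add: algebra_simps)
    show "0 \<le> blinfun_apply (xs - (ys + t *\<^sub>R zs)) (x - (y + \<mu> *\<^sub>R u))"
      unfolding e using P 1 2 3 ar(1) by linarith
  qed
  hence "ys + t *\<^sub>R zs \<in> ran_op T" unfolding ran_op_def by force
  hence "blinfun_apply (ys + t *\<^sub>R zs) u \<le> M" using N by blast
  hence "t * blinfun_apply zs u \<le> B" unfolding B_def by (simp add: blinfun.bilinear_simps)
  thus False using ar(2) by simp
qed

lemma sup_bound:
  assumes "(SUP x\<in>A. ereal (f x)) < \<infinity>"
  shows "\<exists>M. \<forall>x\<in>A. f x \<le> M"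
proof -
  obtain n :: nat where n: "(SUP x\<in>A. ereal (f x)) < ereal (real n)"
    using assms less_PInf_Ex_of_nat by auto
  have "f x \<le> real n" if "x\<in>A" for x
  proof -
    have "ereal (f x) \<le> (SUP x\<in>A. ereal (f x))" using that by (rule SUP_upper)
    hence "ereal (f x) < ereal (real n)" using n by (rule order.strict_trans1)
    thus ?thesis by simp
  qed
  thus ?thesis by blast
qed

theorem lemma4p2:
  fixes T :: "('a::banach \<times> ('a \<Rightarrow>\<^sub>L real)) set"
  assumes "maximal_monotone T"
  shows "eff_dom (supp_dom (dom_op T)) \<subseteq> rec_cone (wstar_closure (convex hull (ran_op T))) \<and>
         {u::'a. canon_emb u \<in> eff_dom (supp_ran (ran_op T))}
           \<subseteq> rec_cone (closure (convex hull (dom_op T)))"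
proof
  note mm = assms
  have Tne: "T \<noteq> {}" using maxmono_nonempty[OF mm] .
  show "eff_dom (supp_dom (dom_op T)) \<subseteq> rec_cone (wstar_closure (convex hull (ran_op T)))"
  proof
    fix us assume "us \<in> eff_dom (supp_dom (dom_op T))"
    hence "(SUP x\<in>dom_op T. ereal (blinfun_apply us x)) < \<infinity>"
      unfolding eff_dom_def supp_dom_def by simp
    then obtain M where M: "\<forall>x\<in>dom_op T. blinfun_apply us x \<le> M" using sup_bound by blast
    define K where "K = convex hull (ran_op T)"
    have Kc: "convex K" unfolding K_def by simp
    have RK: "ran_op T \<subseteq> K" unfolding K_def by (rule hull_subset)
    have Kne: "K \<noteq> {}" using RK Tne unfolding ran_op_def by auto
    show "us \<in> rec_cone (wstar_closure (convex hull (ran_op T)))"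
      unfolding rec_cone_def K_def[symmetric]
    proof (intro CollectI ballI allI impI)
      fix xs l assume xs: "xs \<in> wstar_closure K" and l: "(0::real) \<le> l"
      show "xs + l *\<^sub>R us \<in> wstar_closure K"
      proof (rule ccontr)
        define w where "w = xs + l *\<^sub>R us"
        assume "xs + l *\<^sub>R us \<notin> wstar_closure K"
        then obtain F e where F: "finite F" and e: "e > 0" and
          sepF: "\<forall>g\<in>K. \<exists>x\<in>F. \<not> \<bar>blinfun_apply w x - blinfun_apply g x\<bar> < e"
          unfolding wstar_closure_def w_def by blast
        define q where "q h = (\<Sum>x\<in>F. \<bar>blinfun_apply h x\<bar>)" for h :: "'a \<Rightarrow>\<^sub>L real"
        have qadd: "q (h1 + h2) \<le> q h1 + q h2" for h1 h2
          unfolding q_def by (simp add: blinfun.bilinear_simps sum.distrib[symmetric] sum_mono abs_triangle_ineq)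
        have qsc: "q (c *\<^sub>R h) = \<bar>c\<bar> * q h" for c h
          unfolding q_def by (simp add: blinfun.bilinear_simps sum_distrib_left abs_mult)
        have sep: "e \<le> q (w - g)" if gK: "g \<in> K" for g
        proof -
          obtain x where x: "x\<in>F" "e \<le> \<bar>blinfun_apply w x - blinfun_apply g x\<bar>"
            using sepF gK by (meson not_less)
          have "\<bar>blinfun_apply (w - g) x\<bar> \<le> q (w - g)"
            unfolding q_def using F x(1) by (intro member_le_sum) auto
          thus ?thesis using x by (simp add: blinfun.bilinear_simps)
        qed
        from hb_sep[OF qadd qsc Kc Kne e sep] obtain L where
          Ladd: "\<forall>x y. L (x + y) = L x + L y" and Lsc: "\<forall>c x. L (c *\<^sub>R x) = c * L x"
          and Lq: "\<forall>x. L x \<le> q x" and LK: "\<forall>g\<in>K. L g + e/2 \<le> L w" by blast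
        have ker: "\<forall>h::'a \<Rightarrow>\<^sub>L real. (\<forall>x\<in>F. blinfun_apply h x = 0) \<longrightarrow> L h = 0"
        proof (intro allI impI)
          fix h :: "'a \<Rightarrow>\<^sub>L real" assume h: "\<forall>x\<in>F. blinfun_apply h x = 0"
          have "q h = 0" "q (-h) = 0" unfolding q_def using h by (simp_all add: blinfun.bilinear_simps)
          moreover have "L (-h) = - L h" using Lsc[rule_format, of "-1" h] by simp
          ultimately show "L h = 0" using Lq[rule_format, of h] Lq[rule_format, of "-h"] by simp
        qed
        obtain a where a: "\<forall>h::'a \<Rightarrow>\<^sub>L real. L h = (\<Sum>x\<in>F. a x * blinfun_apply h x)"
        proof -
          have "\<exists>a. \<forall>v. L v = (\<Sum>i\<in>F. a i * blinfun_apply v i)"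
            using factor_lemma[OF F, of "\<lambda>x h. blinfun_apply h x" L] Ladd Lsc ker
            by (simp add: blinfun.bilinear_simps)
          thus ?thesis using that by blast
        qed
        define z where "z = (\<Sum>x\<in>F. a x *\<^sub>R x)"
        have Lz: "L h = blinfun_apply h z" for h :: "'a \<Rightarrow>\<^sub>L real"
          unfolding z_def a[rule_format] by (simp add: blinfun.sum_right blinfun.scaleR_right)
        define \<sigma> where "\<sigma> = blinfun_apply xs z + l * blinfun_apply us z - e/2"
        have Kb: "blinfun_apply g z \<le> \<sigma>" if "g\<in>K" for g
        proof -
          have "blinfun_apply g z + e/2 \<le> blinfun_apply xs z + l * blinfun_apply us z"
            using LK that unfolding Lz w_def by (simp add: blinfun.bilinear_simps)
          thus ?thesis unfolding \<sigma>_def by linarith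
        qed
        have "e/4 > 0" using e by simp
        then obtain g where g: "g\<in>K" "\<bar>blinfun_apply xs z - blinfun_apply g z\<bar> < e/4"
        proof -
          have "\<forall>F e. finite F \<and> e > 0 \<longrightarrow> (\<exists>g\<in>K. \<forall>x\<in>F. \<bar>blinfun_apply xs x - blinfun_apply g x\<bar> < e)"
            using xs unfolding wstar_closure_def by blast
          hence "\<exists>g\<in>K. \<forall>x\<in>{z}. \<bar>blinfun_apply xs x - blinfun_apply g x\<bar> < e/4"
            using \<open>e/4 > 0\<close> by blast
          thus ?thesis using that by blast
        qed
        have "l * blinfun_apply us z > 0" using Kb[OF g(1)] g(2) e unfolding \<sigma>_def by linarith
        hence c: "blinfun_apply us z > 0" using l by (simp add: zero_less_mult_iff)
        have "\<forall>r\<in>ran_op T. blinfun_apply r z \<le> \<sigma>" using Kb RK by blast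
        thus False using core1[OF mm M c] by blast
      qed
    qed
  qed
next
  note mm = assms
  have Tne: "T \<noteq> {}" using maxmono_nonempty[OF mm] .
  show "{u::'a. canon_emb u \<in> eff_dom (supp_ran (ran_op T))} \<subseteq> rec_cone (closure (convex hull (dom_op T)))"
  proof
    fix u assume "u \<in> {u::'a. canon_emb u \<in> eff_dom (supp_ran (ran_op T))}"
    hence "(SUP xs\<in>ran_op T. ereal (blinfun_apply (canon_emb u) xs)) < \<infinity>"
      unfolding eff_dom_def supp_ran_def by simp
    moreover have "blinfun_apply (canon_emb u) = (\<lambda>f. blinfun_apply f u)"
      unfolding canon_emb_def by (rule bounded_linear_Blinfun_apply) simp
    ultimately have "(SUP xs\<in>ran_op T. ereal (blinfun_apply xs u)) < \<infinity>" by simp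
    then obtain N where N: "\<forall>xs\<in>ran_op T. blinfun_apply xs u \<le> N" using sup_bound[of "\<lambda>xs. blinfun_apply xs u"] by blast
    define K where "K = convex hull (dom_op T)"
    have Kc: "convex K" unfolding K_def by simp
    have DK: "dom_op T \<subseteq> K" unfolding K_def by (rule hull_subset)
    have Kne: "K \<noteq> {}" using DK Tne unfolding dom_op_def by auto
    show "u \<in> rec_cone (closure (convex hull (dom_op T)))"
      unfolding rec_cone_def K_def[symmetric]
    proof (intro CollectI ballI allI impI)
      fix x l assume x: "x \<in> closure K" and l: "(0::real) \<le> l"
      show "x + l *\<^sub>R u \<in> closure K"
      proof (rule ccontr)
        define w where "w = x + l *\<^sub>R u"
        assume "x + l *\<^sub>R u \<notin> closure K"
        then obtain e where e: "e > 0" and sepF: "\<forall>g\<in>K. \<not> dist g w < e"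
          unfolding closure_approachable w_def by blast
        have sep: "e \<le> norm (w - g)" if "g\<in>K" for g
        proof -
          have "e \<le> norm (g - w)" using sepF that by (simp add: dist_norm not_less)
          thus ?thesis by (simp add: norm_minus_commute)
        qed
        from hb_sep[OF norm_triangle_ineq norm_scaleR Kc Kne e sep] obtain L where
          Ladd: "\<forall>x y. L (x + y) = L x + L y" and Lsc: "\<forall>c x. L (c *\<^sub>R x) = c * L x"
          and Lq: "\<forall>x. L x \<le> norm x" and LK: "\<forall>g\<in>K. L g + e/2 \<le> L w" by blast
        have Lneg: "L (-v) = - L v" for v using Lsc[rule_format, of "-1" v] by simp
        have bl: "bounded_linear L"
        proof (rule bounded_linear_intro[where K=1])
          show "L (x + y) = L x + L y" for x y using Ladd by blast
          show "L (r *\<^sub>R x) = r *\<^sub>R L x" for r x using Lsc by simp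
          show "norm (L v) \<le> norm v * 1" for v
            using Lq[rule_format, of v] Lq[rule_format, of "-v"] Lneg[of v] by simp
        qed
        define zs where "zs = Blinfun L"
        have zsL: "blinfun_apply zs = L" unfolding zs_def using bl by (rule bounded_linear_Blinfun_apply)
        define \<sigma> where "\<sigma> = L x + l * L u - e/2"
        have Kb: "L g \<le> \<sigma>" if "g\<in>K" for g
        proof -
          have "L g + e/2 \<le> L x + l * L u" using LK that Ladd Lsc unfolding w_def by simp
          thus ?thesis unfolding \<sigma>_def by linarith
        qed
        have "e/4 > 0" using e by simp
        then obtain g where g: "g\<in>K" "dist g x < e/4" using x unfolding closure_approachable by blast
        have "L (x - g) \<le> norm (x - g)" using Lq by blast
        moreover have "L (x - g) = L x - L g" using Ladd[rule_format, of "x - g" g] by simp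
        moreover have "norm (x - g) < e/4" using g(2) by (simp add: dist_norm norm_minus_commute)
        ultimately have "l * L u > 0" using Kb[OF g(1)] e unfolding \<sigma>_def by linarith
        hence c: "blinfun_apply zs u > 0" using l zsL by (simp add: zero_less_mult_iff)
        have "\<forall>y\<in>dom_op T. blinfun_apply zs y \<le> \<sigma>" using Kb DK zsL by auto
        thus False using core2[OF mm N c] by blast
      qed
    qed
  qed
qed

end
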